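(* Let $G$ and $H$ be trees, let $\omega:(V(G)\times V(H))\cup(E(G)\times E(H))\to\mathbb{R}\cup\{-\infty\}$ be a weight function, and let $r\in V(G)$ be arbitrary. Then $\mathrm{MCS}_{\mathrm{fast}}(G^r,H)=\mathrm{MCS}(G,H)$, where $\mathrm{MCS}_{\mathrm{fast}}(G^r,H):=\max\{\mathrm{MCS}_{\mathrm{root}}(G^r_u,H^{s})\mid u\in V(G),\ s\in V(H)\}$ and $\mathrm{MCS}(G,H):=\max\{\mathrm{MCS}_{\mathrm{root}}(G^{r'},H^{s})\mid r'\in V(G),\ s\in V(H)\}$.
   Context: All graphs are simple and undirected; a tree is a connected graph with a unique path between any two vertices. An isomorphism between graphs $A,B$ is a bijection $\phi:V(A)\to V(B)$ with $uv\in E(A)\Leftrightarrow\phi(u)\phi(v)\in E(B)$. For a tree $G$ and $r\in V(G)$, $G^r$ denotes $G$ rooted at $r$; for $u\in V(G)$, the rooted subtree $G^r_u$ is the subtree of $G$ induced by $u$ and all its descendants in $G^r$, rooted at $u$. A common subtree isomorphism between trees $A$ and $B$ is an isomorphism $\varphi$ between induced subgraphs $A[X]$ and $B[Y]$ that are trees; $\operatorname{dom}(\varphi)=X$. Its weight is $W(\varphi)=\sum_{v\in X}\omega(v,\varphi(v))+\sum_{uv\in E(A[X])}\omega(uv,\varphi(u)\varphi(v))$. For rooted trees $A^a$ and $B^b$ (here subtrees of $G$ and $H$, so $\omega$ applies), $\mathrm{MCS}_{\mathrm{root}}(A^a,B^b)$ is the maximum weight of a common subtree isomorphism $\varphi$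 between $A$ and $B$ with $a\in\operatorname{dom}(\varphi)$ and $\varphi(a)=b$. Equivalently, $\mathrm{MCS}_{\mathrm{root}}(A^a,B^b)=\omega(a,b)+W(M)$, where $M$ is a maximum weight matching (possibly empty) of the complete bipartite graph on the children $C(a)$ of $a$ and $C(b)$ of $b$ with edge weights $\omega(aa',bb')+\mathrm{MCS}_{\mathrm{root}}(A^a_{a'},B^b_{b'})$. *)

theory Defs
  imports Main "HOL-Library.Extended_Real"
begin

definition is_path :: "'a set \<Rightarrow> 'a set set \<Rightarrow> 'a list \<Rightarrow> bool" where
  "is_path V E xs \<longleftrightarrow> xs \<noteq> [] \<and> distinct xs \<and> set xs \<subseteq> V \<and>
     (\<forall>i < length xs - 1. {xs ! i, xs ! Suc i} \<in> E)"

definition simple_graph :: "'a set \<Rightarrow> 'a set set \<Rightarrow> bool" where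
  "simple_graph V E \<longleftrightarrow> finite V \<and> E \<subseteq> {{u, v} | u v. u \<in> V \<and> v \<in> V \<and> u \<noteq> v}"

definition tree :: "'a set \<Rightarrow> 'a set set \<Rightarrow> bool" where
  "tree V E \<longleftrightarrow> simple_graph V E \<and> V \<noteq> {} \<and>
     (\<forall>u\<in>V. \<forall>v\<in>V. \<exists>!xs. is_path V E xs \<and> hd xs = u \<and> last xs = v)"

definition induced :: "'a set set \<Rightarrow> 'a set \<Rightarrow> 'a set set" where
  "induced E X = {e \<in> E. e \<subseteq> X}"

definition tree_path :: "'a set \<Rightarrow> 'a set set \<Rightarrow> 'a \<Rightarrow> 'a \<Rightarrow> 'a list" where
  "tree_path V E r w = (THE xs. is_path V E xs \<and> hd xs = r \<and> last xs = w)"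

text \<open>Vertex set of the rooted subtree G^r_u: u and all its descendants in G^r.\<close>
definition descendants :: "'a set \<Rightarrow> 'a set set \<Rightarrow> 'a \<Rightarrow> 'a \<Rightarrow> 'a set" where
  "descendants V E r u = {w \<in> V. u \<in> set (tree_path V E r w)}"

text \<open>phi restricted to X is a common subtree isomorphism between (VA,EA) and (VB,EB),
  with dom(phi) = X.\<close>
definition common_subtree_iso ::
  "'a set \<Rightarrow> 'a set set \<Rightarrow> 'b set \<Rightarrow> 'b set set \<Rightarrow> ('a \<Rightarrow> 'b) \<Rightarrow> 'a set \<Rightarrow> bool" where
  "common_subtree_iso VA EA VB EB \<phi> X \<longleftrightarrow>
     X \<subseteq> VA \<and> \<phi> ` X \<subseteq> VB \<and> inj_on \<phi> X \<and>
     tree X (induced EA X) \<and> tree (\<phi> ` X) (induced EB (\<phi> ` X)) \<and>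
     (\<forall>u\<in>X. \<forall>v\<in>X. {u, v} \<in> EA \<longleftrightarrow> {\<phi> u, \<phi> v} \<in> EB)"

definition iso_weight ::
  "('a \<Rightarrow> 'b \<Rightarrow> ereal) \<Rightarrow> ('a set \<Rightarrow> 'b set \<Rightarrow> ereal) \<Rightarrow> 'a set set \<Rightarrow> ('a \<Rightarrow> 'b) \<Rightarrow> 'a set \<Rightarrow> ereal" where
  "iso_weight \<omega>V \<omega>E EA \<phi> X =
     (\<Sum>v\<in>X. \<omega>V v (\<phi> v)) + (\<Sum>e\<in>induced EA X. \<omega>E e (\<phi> ` e))"

text \<open>MCS_root(A^a, B^b): maximum weight of a common subtree isomorphism mapping a to b.
  (The maximum is attained, so it coincides with the supremum used here.)\<close>
definition mcs_root ::
  "('a \<Rightarrow> 'b \<Rightarrow> ereal) \<Rightarrow> ('a set \<Rightarrow> 'b set \<Rightarrow> ereal) \<Rightarrow>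
   'a set \<Rightarrow> 'a set set \<Rightarrow> 'a \<Rightarrow> 'b set \<Rightarrow> 'b set set \<Rightarrow> 'b \<Rightarrow> ereal" where
  "mcs_root \<omega>V \<omega>E VA EA a VB EB b =
     Sup {iso_weight \<omega>V \<omega>E EA \<phi> X | \<phi> X.
            common_subtree_iso VA EA VB EB \<phi> X \<and> a \<in> X \<and> \<phi> a = b}"

definition mcs_fast ::
  "('a \<Rightarrow> 'b \<Rightarrow> ereal) \<Rightarrow> ('a set \<Rightarrow> 'b set \<Rightarrow> ereal) \<Rightarrow>
   'a set \<Rightarrow> 'a set set \<Rightarrow> 'a \<Rightarrow> 'b set \<Rightarrow> 'b set set \<Rightarrow> ereal" where
  "mcs_fast \<omega>V \<omega>E VG EG r VH EH =
     Max {mcs_root \<omega>V \<omega>E (descendants VG EG r u) (induced EG (descendants VG EG r u)) u VH EH s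
          | u s. u \<in> VG \<and> s \<in> VH}"

definition mcs ::
  "('a \<Rightarrow> 'b \<Rightarrow> ereal) \<Rightarrow> ('a set \<Rightarrow> 'b set \<Rightarrow> ereal) \<Rightarrow>
   'a set \<Rightarrow> 'a set set \<Rightarrow> 'b set \<Rightarrow> 'b set set \<Rightarrow> ereal" where
  "mcs \<omega>V \<omega>E VG EG VH EH =
     Max {mcs_root \<omega>V \<omega>E VG EG r' VH EH s | r' s. r' \<in> VG \<and> s \<in> VH}"

end

theory Submission
  imports Defs
begin

lemma is_path_unique:
  assumes "tree V E" "is_path V E xs" "is_path V E ys" "hd xs = hd ys" "last xs = last ys"
  shows "xs = ys"
proof -
  have ne: "xs \<noteq> []" "ys \<noteq> []" "set xs \<subseteq> V" using assms(2,3) unfolding is_path_def by auto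
  hence "hd xs \<in> V" "last xs \<in> V" by auto
  with assms(1) have "\<exists>!zs. is_path V E zs \<and> hd zs = hd xs \<and> last zs = last xs"
    unfolding tree_def by blast
  thus ?thesis using assms by metis
qed

lemma tree_path_props:
  assumes "tree V E" "r \<in> V" "w \<in> V"
  shows "is_path V E (tree_path V E r w) \<and> hd (tree_path V E r w) = r \<and> last (tree_path V E r w) = w"
proof -
  from assms have "\<exists>!xs. is_path V E xs \<and> hd xs = r \<and> last xs = w" unfolding tree_def by blast
  thus ?thesis unfolding tree_path_def by (rule theI')
qed

lemma tree_path_eq:
  assumes "tree V E" "is_path V E xs" "hd xs = r" "last xs = w"
  shows "tree_path V E r w = xs"
proof -
  have "r \<in> V" "w \<in> V" using assms(2-4) unfolding is_path_def by auto
  thus ?thesis using tree_path_props[OF assms(1)] is_path_unique[OF assms(1)] assms by metis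
qed

lemma is_path_take:
  assumes "is_path V E xs" "k < length xs"
  shows "is_path V E (take (Suc k) xs)"
  using assms unfolding is_path_def
  by (auto dest: in_set_takeD)

lemma is_path_drop:
  assumes "is_path V E xs" "k < length xs"
  shows "is_path V E (drop k xs)"
  using assms unfolding is_path_def
  by (auto dest: in_set_dropD simp: add.commute)

lemma edge_path:
  assumes T: "tree V E" and r: "r \<in> V" and e: "{a, b} \<in> E"
  shows "tree_path V E r b = tree_path V E r a @ [b] \<or> tree_path V E r a = tree_path V E r b @ [a]"
proof -
  from T have sg: "simple_graph V E" unfolding tree_def by auto
  from e sg have ab: "a \<in> V" "b \<in> V" "a \<noteq> b" unfolding simple_graph_def
    by (auto simp: doubleton_eq_iff)
  define p where "p = tree_path V E r a"
  have pp: "is_path V E p" "hd p = r" "last p = a" using tree_path_props[OF T r ab(1)] p_def by auto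
  show ?thesis
  proof (cases "b \<in> set p")
    case False
    have "is_path V E (p @ [b])"
      using pp False ab e unfolding is_path_def
      apply (auto simp: nth_append last_conv_nth insert_commute)
      by (metis One_nat_def Suc_lessI Suc_pred diff_Suc_1 insert_commute length_greater_0_conv not_less_eq)
    moreover have "hd (p @ [b]) = r" using pp unfolding is_path_def by auto
    ultimately have "tree_path V E r b = p @ [b]" using tree_path_eq[OF T] by auto
    thus ?thesis unfolding p_def by auto
  next
    case True
    then obtain k where k: "k < length p" "p ! k = b" by (auto simp: in_set_conv_nth)
    have pre: "is_path V E (take (Suc k) p)" using is_path_take[OF pp(1) k(1)] .
    have "hd (take (Suc k) p) = r" using pp k unfolding is_path_def by auto
    moreover have "last (take (Suc k) p) = b" using k by (simp add: take_Suc_conv_app_nth)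
    ultimately have Pb: "tree_path V E r b = take (Suc k) p" using tree_path_eq[OF T pre] by auto
    have suf: "is_path V E (drop k p)" using is_path_drop[OF pp(1) k(1)] .
    have "hd (drop k p) = b" using k by (simp add: hd_drop_conv_nth)
    moreover have "last (drop k p) = a" using k pp by simp
    moreover have "is_path V E [b, a]" using ab e unfolding is_path_def by (auto simp: insert_commute)
    ultimately have "drop k p = [b, a]" using is_path_unique[OF T suf] by auto
    hence "p = take k p @ [b, a]" by (metis append_take_drop_id)
    moreover have "take (Suc k) p = take k p @ [b]" using k by (simp add: take_Suc_conv_app_nth)
    ultimately have "p = tree_path V E r b @ [a]" using Pb by simp
    thus ?thesis unfolding p_def by auto
  qed
qed


lemma induced_induced: "X \<subseteq> D \<Longrightarrow> induced (induced E D) X = induced E X"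
  unfolding induced_def by auto

lemma top_vertex:
  assumes T: "tree V E" and r: "r \<in> V" and X: "X \<subseteq> V" and TX: "tree X (induced E X)"
  obtains u where "u \<in> X" "X \<subseteq> descendants V E r u"
proof -
  have "X \<noteq> {}" using TX unfolding tree_def by auto
  then obtain x0 where "x0 \<in> X" by auto
  then obtain u where u: "u \<in> X" "\<forall>w. w \<in> X \<longrightarrow> length (tree_path V E r u) \<le> length (tree_path V E r w)"
    using ex_has_least_nat[where P="\<lambda>x. x \<in> X" and m="\<lambda>w. length (tree_path V E r w)"] by blast
  have "w \<in> descendants V E r u" if w: "w \<in> X" for w
  proof -
    obtain xs where xs: "is_path X (induced E X) xs" "hd xs = u" "last xs = w"
      using TX u(1) w unfolding tree_def by blast
    have ne: "xs \<noteq> []" and sx: "set xs \<subseteq> X" using xs unfolding is_path_def by auto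
    have "\<forall>i < length xs. u \<in> set (tree_path V E r (xs ! i))"
    proof (intro allI impI)
      fix i assume "i < length xs"
      thus "u \<in> set (tree_path V E r (xs ! i))"
      proof (induction i)
        case 0
        have "u \<in> V" using u X by auto
        then have "last (tree_path V E r u) = u" "tree_path V E r u \<noteq> []"
          using tree_path_props[OF T r] unfolding is_path_def by auto
        thus ?case using xs(2) ne by (metis hd_conv_nth last_in_set)
      next
        case (Suc i)
        define a where "a = xs ! i"
        define b where "b = xs ! Suc i"
        have IH: "u \<in> set (tree_path V E r a)" using Suc a_def by auto
        have "{a, b} \<in> induced E X" using xs(1) Suc.prems unfolding is_path_def a_def b_def by auto
        hence e: "{a, b} \<in> E" unfolding induced_def by auto
        have bX: "b \<in> X" using sx Suc.prems b_def by auto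
        from edge_path[OF T r e] show ?case
        proof
          assume "tree_path V E r b = tree_path V E r a @ [b]"
          thus ?case using IH b_def by auto
        next
          assume h: "tree_path V E r a = tree_path V E r b @ [a]"
          show ?case
          proof (cases "a = u")
            case True
            with h have "length (tree_path V E r u) > length (tree_path V E r b)" by simp
            with u(2) bX show ?thesis by force
          next
            case False
            with IH h show ?thesis using b_def by auto
          qed
        qed
      qed
    qed
    hence "u \<in> set (tree_path V E r (xs ! (length xs - 1)))" using ne by auto
    moreover have "xs ! (length xs - 1) = w" using xs(3) ne by (simp add: last_conv_nth)
    ultimately show ?thesis using w X unfolding descendants_def by auto
  qed
  thus ?thesis using that u(1) by blast
qed

theorem lemma2:
  fixes VG :: "'a set" and EG :: "'a set set" and VH :: "'b set" and EH :: "'b set set"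
    and \<omega>V :: "'a \<Rightarrow> 'b \<Rightarrow> ereal" and \<omega>E :: "'a set \<Rightarrow> 'b set \<Rightarrow> ereal"
  assumes "tree VG EG" and "tree VH EH"
    and "\<And>u v. \<omega>V u v \<noteq> \<infinity>" and "\<And>e f. \<omega>E e f \<noteq> \<infinity>"
    and "r \<in> VG"
  shows "mcs_fast \<omega>V \<omega>E VG EG r VH EH = mcs \<omega>V \<omega>E VG EG VH EH"
proof -
  let ?D = "\<lambda>u. descendants VG EG r u"
  define S1 where "S1 = {mcs_root \<omega>V \<omega>E (?D u) (induced EG (?D u)) u VH EH s | u s. u \<in> VG \<and> s \<in> VH}"
  define S2 where "S2 = {mcs_root \<omega>V \<omega>E VG EG r' VH EH s | r' s. r' \<in> VG \<and> s \<in> VH}"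
  have fin: "finite VG" "finite VH" "VG \<noteq> {}" "VH \<noteq> {}"
    using assms(1,2) unfolding tree_def simple_graph_def by auto
  have S1eq: "S1 = (\<lambda>(u,s). mcs_root \<omega>V \<omega>E (?D u) (induced EG (?D u)) u VH EH s) ` (VG \<times> VH)"
    unfolding S1_def by auto
  have S2eq: "S2 = (\<lambda>(u,s). mcs_root \<omega>V \<omega>E VG EG u VH EH s) ` (VG \<times> VH)"
    unfolding S2_def by auto
  have f1: "finite S1" "S1 \<noteq> {}" using S1eq fin by auto
  have f2: "finite S2" "S2 \<noteq> {}" using S2eq fin by auto
  have DV: "?D u \<subseteq> VG" for u unfolding descendants_def by auto
  have le1: "Max S1 \<le> Max S2"
  proof (subst Max_le_iff[OF f1], intro ballI)
    fix m assume "m \<in> S1"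
    then obtain u s where us: "u \<in> VG" "s \<in> VH"
      "m = mcs_root \<omega>V \<omega>E (?D u) (induced EG (?D u)) u VH EH s" unfolding S1_def by auto
    have "m \<le> mcs_root \<omega>V \<omega>E VG EG u VH EH s"
      unfolding us(3) mcs_root_def
    proof (rule Sup_subset_mono, rule subsetI)
      fix x assume "x \<in> {iso_weight \<omega>V \<omega>E (induced EG (?D u)) \<phi> X | \<phi> X.
            common_subtree_iso (?D u) (induced EG (?D u)) VH EH \<phi> X \<and> u \<in> X \<and> \<phi> u = s}"
      then obtain \<phi> X where c: "common_subtree_iso (?D u) (induced EG (?D u)) VH EH \<phi> X" "u \<in> X" "\<phi> u = s"
        and x: "x = iso_weight \<omega>V \<omega>E (induced EG (?D u)) \<phi> X" by blast
      have XD: "X \<subseteq> ?D u" using c(1) unfolding common_subtree_iso_def by auto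
      have "common_subtree_iso VG EG VH EH \<phi> X"
        using c(1) XD DV[of u] unfolding common_subtree_iso_def induced_induced[OF XD]
        by (auto simp: induced_def subset_iff)
      moreover have "iso_weight \<omega>V \<omega>E (induced EG (?D u)) \<phi> X = iso_weight \<omega>V \<omega>E EG \<phi> X"
        unfolding iso_weight_def induced_induced[OF XD] ..
      ultimately show "x \<in> {iso_weight \<omega>V \<omega>E EG \<phi> X | \<phi> X.
            common_subtree_iso VG EG VH EH \<phi> X \<and> u \<in> X \<and> \<phi> u = s}" using c x by blast
    qed
    also have "\<dots> \<le> Max S2" using f2 us unfolding S2_def by (intro Max_ge) auto
    finally show "m \<le> Max S2" .
  qed
  have le2: "Max S2 \<le> Max S1"
  proof (subst Max_le_iff[OF f2], intro ballI)
    fix m assume "m \<in> S2"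
    then obtain r' s where us: "m = mcs_root \<omega>V \<omega>E VG EG r' VH EH s" unfolding S2_def by auto
    show "m \<le> Max S1" unfolding us mcs_root_def
    proof (rule Sup_least)
      fix x assume "x \<in> {iso_weight \<omega>V \<omega>E EG \<phi> X | \<phi> X.
            common_subtree_iso VG EG VH EH \<phi> X \<and> r' \<in> X \<and> \<phi> r' = s}"
      then obtain \<phi> X where c: "common_subtree_iso VG EG VH EH \<phi> X" "r' \<in> X" "\<phi> r' = s"
        and x: "x = iso_weight \<omega>V \<omega>E EG \<phi> X" by blast
      have XV: "X \<subseteq> VG" and TX: "tree X (induced EG X)" using c(1) unfolding common_subtree_iso_def by auto
      obtain u where u: "u \<in> X" "X \<subseteq> ?D u" using top_vertex[OF assms(1) assms(5) XV TX] by blast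
      have "common_subtree_iso (?D u) (induced EG (?D u)) VH EH \<phi> X"
        using c(1) u(2) unfolding common_subtree_iso_def induced_induced[OF u(2)]
        by (auto simp: induced_def subset_iff)
      moreover have "iso_weight \<omega>V \<omega>E (induced EG (?D u)) \<phi> X = iso_weight \<omega>V \<omega>E EG \<phi> X"
        unfolding iso_weight_def induced_induced[OF u(2)] ..
      ultimately have "iso_weight \<omega>V \<omega>E EG \<phi> X \<le> mcs_root \<omega>V \<omega>E (?D u) (induced EG (?D u)) u VH EH (\<phi> u)"
        unfolding mcs_root_def using u(1) by (intro Sup_upper) (smt (verit, best) mem_Collect_eq)
      also have "\<dots> \<le> Max S1"
      proof -
        have "\<phi> u \<in> VH" using c(1) u(1) unfolding common_subtree_iso_def by auto
        thus ?thesis using f1 u XV unfolding S1_def by (intro Max_ge) auto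
      qed
      finally show "x \<le> Max S1" using x by simp
    qed
  qed
  show ?thesis unfolding mcs_fast_def mcs_def using le1 le2 unfolding S1_def S2_def by simp
qed

end
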